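(* For every target rate $r>0$, $P_{\rm r}>0$ and $\mathcal C_x\in[0,1)$, writing $\beta=\frac{\Psi_r(\mathcal C_x)}{P_{\rm r}\theta_{\rm rd}(1-\mathcal C_x^2)}$, \[ \mathcal P_{\rm E-E}=1-\frac{e^{-\beta}}{\Gamma(m_{\rm sd})\Gamma(m_{\rm rr})\Gamma(m_{\rm sr})\theta_{\rm sd}^{m_{\rm sd}}\theta_{\rm rr}^{m_{\rm rr}}}\sum_{m=0}^{m_{\rm rd}-1}\sum_{k=0}^m\binom mk\frac{P_{\rm s}^k\Gamma(k+m_{\rm sd})\beta^m}{\Gamma(m+1)\left(P_{\rm s}\beta+\frac1{\theta_{\rm sd}}\right)^{k+m_{\rm sd}}}\int_0^\infty x^{m_{\rm rr}-1}\Gamma\!\left(m_{\rm sr},\frac{P_{\rm r}x+1}{P_{\rm s}\theta_{\rm sr}}\Psi_r\!\left(\frac{P_{\rm r}x\,\mathcal C_x}{P_{\rm r}x+1}\right)\right)e^{-x/\theta_{\rm rr}}dx . \]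
   Context: Let $P_{\rm s}>0$, $P_{\rm r}>0$ be the source and relay transmit powers. For links $ij\in\{\mathrm{sr},\mathrm{rr},\mathrm{rd},\mathrm{sd}\}$ let $g_{ij}$ be mutually independent random channel gains, $g_{ij}$ gamma distributed with integer shape parameter $m_{ij}\ge1$ and scale $\theta_{ij}=\pi_{ij}/m_{ij}$, where $\pi_{ij}=\mathbb E[g_{ij}]>0$; i.e. $g_{ij}$ has density $x^{m_{ij}-1}e^{-x/\theta_{ij}}/(\Gamma(m_{ij})\theta_{ij}^{m_{ij}})$ for $x\ge0$. For a circularity coefficient $\mathcal C_x\in[0,1)$ define $R_{\rm sr}(P_{\rm r},\mathcal C_x)=\tfrac12\log_2\frac{(P_{\rm s}g_{\rm sr}+P_{\rm r}g_{\rm rr}+1)^2-(P_{\rm r}g_{\rm rr}\mathcal C_x)^2}{(P_{\rm r}g_{\rm rr}+1)^2-(P_{\rm r}g_{\rm rr}\mathcal C_x)^2}$ and $R_{\rm rd}(P_{\rm r},\mathcal C_x)=\tfrac12\log_2\frac{(P_{\rm r}g_{\rm rd}+P_{\rm s}g_{\rm sd}+1)^2-(P_{\rm r}g_{\rm rd}\mathcal C_x)^2}{(P_{\rm s}g_{\rm sd}+1)^2}$. For a target rate $r>0$ put $\gamma=2^{2r}-1$, $\eta=2^r-1$ and $\Psi_r(x)=\sqrt{1+\gamma(1-x^2)}-1$. The outage probabilities are $\mathcal P_{\rm sr}=\mathbb P\{R_{\rm sr}<r\}$, $\mathcal P_{\rm rd}=\mathbb P\{R_{\rm rd}<r\}$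 and $\mathcal P_{\rm E-E}=\mathbb P\{\min(R_{\rm sr},R_{\rm rd})<r\}$. $\Gamma(a,x)=\int_x^\infty t^{a-1}e^{-t}dt$ is the upper incomplete gamma function. *)

theory Defs
  imports "HOL-Probability.Probability"
begin

definition gamma_density :: "nat \<Rightarrow> real \<Rightarrow> real \<Rightarrow> real" where
  "gamma_density m \<theta> x =
     (if x \<ge> 0 then x ^ (m - 1) * exp (- x / \<theta>) / (Gamma (real m) * \<theta> ^ m) else 0)"

definition upper_inc_gamma :: "nat \<Rightarrow> real \<Rightarrow> real" where
  "upper_inc_gamma a x = (LBINT t:{x..}. t ^ (a - 1) * exp (- t))"

definition Psi :: "real \<Rightarrow> real \<Rightarrow> real" where
  "Psi r x = sqrt (1 + (2 powr (2 * r) - 1) * (1 - x\<^sup>2)) - 1"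

definition R_sr :: "real \<Rightarrow> real \<Rightarrow> real \<Rightarrow> real \<Rightarrow> real \<Rightarrow> real" where
  "R_sr Ps Pr C gsr grr =
     1/2 * log 2 (((Ps * gsr + Pr * grr + 1)\<^sup>2 - (Pr * grr * C)\<^sup>2) /
                  ((Pr * grr + 1)\<^sup>2 - (Pr * grr * C)\<^sup>2))"

definition R_rd :: "real \<Rightarrow> real \<Rightarrow> real \<Rightarrow> real \<Rightarrow> real \<Rightarrow> real" where
  "R_rd Ps Pr C grd gsd =
     1/2 * log 2 (((Pr * grd + Ps * gsd + 1)\<^sup>2 - (Pr * grd * C)\<^sup>2) / (Ps * gsd + 1)\<^sup>2)"

end

theory Submission
  imports Defs
begin


lemma erlang_tail:
  assumes l: "0 < l" and a: "0 \<le> a"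
  shows "(\<integral>\<^sup>+x. ennreal (erlang_density k l x) * indicator {a..} x \<partial>lborel)
       = ennreal (exp (-l*a) * (\<Sum>n\<le>k. (l*a)^n / fact n))"
proof -
  let ?D = "density lborel (erlang_density k l)"
  interpret D: prob_space ?D using prob_space_erlang_density[OF l] .
  have "(\<integral>\<^sup>+x. ennreal (erlang_density k l x) * indicator {a..} x \<partial>lborel)
      = (\<integral>\<^sup>+x. ennreal (erlang_density k l x) * indicator (UNIV - {..a}) x \<partial>lborel)"
    by (rule nn_integral_cong_AE) (use AE_lborel_singleton[of a] in \<open>auto elim!: eventually_mono split: split_indicator\<close>)
  also have "\<dots> = emeasure ?D (space ?D - {..a})"
    by (simp add: emeasure_density)
  also have "\<dots> = emeasure ?D (space ?D) - emeasure ?D {..a}"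
    by (rule emeasure_compl) auto
  also have "\<dots> = ennreal (1 - erlang_CDF k l a)"
    using emeasure_erlang_density[OF l, of k a] D.emeasure_space_1
    by (simp del: emeasure_density)
       (metis ennreal_1 ennreal_minus erlang_CDF_nonneg[OF l])
  also have "1 - erlang_CDF k l a = exp (-l*a) * (\<Sum>n\<le>k. (l*a)^n / fact n)"
    using a by (simp add: erlang_CDF_def sum_distrib_left mult.commute)
  finally show ?thesis .
qed

lemma erlang_exp_moment:
  assumes l: "0 < l" and s: "0 \<le> s"
  shows "(\<integral>\<^sup>+y. ennreal (erlang_density k l y * exp (-s*y) * y^i) \<partial>lborel)
       = ennreal ((l/(l+s))^(Suc k) * (fact (k+i) / (fact k * (l+s)^i)))"
proof -
  have ls: "0 < l + s" using l s by simp
  have eq: "erlang_density k l y * exp (-s*y) * y^i = (l/(l+s))^(Suc k) * (erlang_density k (l+s) y * y^i)" for y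
  proof (cases "y < 0")
    case False
    have e: "exp (- l * y) * exp (-s*y) = exp (- (l+s) * y)" by (simp add: exp_add[symmetric] algebra_simps)
    have p: "(l/(l+s))^(Suc k) * (l+s)^(Suc k) = l^(Suc k)"
      using ls by (simp add: power_divide)
    have "erlang_density k l y * exp (-s*y) * y^i = (l^(Suc k) * y^k * (exp (- l * y) * exp (-s*y))) / fact k * y^i"
      using False by (simp add: erlang_density_def)
    also have "\<dots> = ((l/(l+s))^(Suc k) * (l+s)^(Suc k)) * y^k * exp (- (l+s) * y) / fact k * y^i"
      by (simp only: e p)
    also have "\<dots> = (l/(l+s))^(Suc k) * (erlang_density k (l+s) y * y^i)"
      using False by (simp add: erlang_density_def)
    finally show ?thesis .
  qed (simp add: erlang_density_def)
  have "(\<integral>\<^sup>+y. ennreal (erlang_density k l y * exp (-s*y) * y^i) \<partial>lborel)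
      = (\<integral>\<^sup>+y. ennreal ((l/(l+s))^(Suc k)) * ennreal (erlang_density k (l+s) y * y^i) \<partial>lborel)"
    unfolding eq using l ls by (intro nn_integral_cong ennreal_mult') simp
  also have "\<dots> = ennreal ((l/(l+s))^(Suc k)) * (\<integral>\<^sup>+y. ennreal (erlang_density k (l+s) y * y^i) \<partial>lborel)"
    by (rule nn_integral_cmult) auto
  also have "\<dots> = ennreal ((l/(l+s))^(Suc k) * (fact (k+i) / (fact k * (l+s)^i)))"
    using l ls by (simp only: nn_integral_erlang_ith_moment ennreal_mult'[symmetric] zero_le_power divide_nonneg_nonneg less_imp_le)
  finally show ?thesis .
qed

lemma set_integral_erlang_tail:
  assumes l: "0 < l" and a: "0 \<le> a"
  shows "(LBINT x:{a..}. erlang_density k l x) = exp (-l*a) * (\<Sum>n\<le>k. (l*a)^n / fact n)"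
proof -
  have "(LBINT x:{a..}. erlang_density k l x) = enn2real (\<integral>\<^sup>+x. ennreal (indicator {a..} x *\<^sub>R erlang_density k l x) \<partial>lborel)"
    unfolding set_lebesgue_integral_def using l by (intro integral_eq_nn_integral) auto
  also have "(\<integral>\<^sup>+x. ennreal (indicator {a..} x *\<^sub>R erlang_density k l x) \<partial>lborel)
     = (\<integral>\<^sup>+x. ennreal (erlang_density k l x) * indicator {a..} x \<partial>lborel)"
    by (intro nn_integral_cong) (simp split: split_indicator)
  also have "\<dots> = ennreal (exp (-l*a) * (\<Sum>n\<le>k. (l*a)^n / fact n))"
    by (rule erlang_tail[OF l a])
  finally show ?thesis using a l by (simp add: sum_nonneg)
qed

lemma uig_closed:
  assumes u: "0 \<le> u"
  shows "upper_inc_gamma a u = fact (a-1) * (exp (-u) * (\<Sum>n\<le>a-1. u^n / fact n))"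
proof -
  have "upper_inc_gamma a u = (LBINT t:{u..}. fact (a-1) * erlang_density (a-1) 1 t)"
    unfolding upper_inc_gamma_def
    by (intro set_lebesgue_integral_cong) (use u in \<open>auto simp: erlang_density_def\<close>)
  also have "\<dots> = fact (a-1) * (LBINT t:{u..}. erlang_density (a-1) 1 t)"
    by (rule set_integral_mult_right)
  also have "\<dots> = fact (a-1) * (exp (-u) * (\<Sum>n\<le>a-1. u^n / fact n))"
    using set_integral_erlang_tail[of 1 u "a-1"] u by simp
  finally show ?thesis .
qed



lemma quad_core:
  fixes a Y C g :: real
  assumes a: "0 < a" and Y: "0 \<le> Y" and C: "0 \<le> C" "C < 1" and g: "0 < g"
  shows "(1+g)*a\<^sup>2 \<le> (Y+a)\<^sup>2 - (Y*C)\<^sup>2 \<longleftrightarrow> a*(sqrt (1+g*(1-C\<^sup>2))-1)/(1-C\<^sup>2) \<le> Y"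
proof -
  define D where "D = 1 - C\<^sup>2"
  have "C*C \<le> C*1" using C by (intro mult_left_mono) auto
  then have D: "0 < D" unfolding D_def using C by (simp add: power2_eq_square)
  define s where "s = sqrt (1+g*D)"
  have s2: "s\<^sup>2 = 1+g*D" unfolding s_def using D g by simp
  have s1: "1 \<le> s" unfolding s_def using D g by simp
  have iden: "(Y+a)\<^sup>2 - (Y*C)\<^sup>2 - (1+g)*a\<^sup>2 = D*(Y - a*(s-1)/D)*(Y + a*(s+1)/D)"
  proof -
    have "D*(Y - a*(s-1)/D)*(Y + a*(s+1)/D) = D*Y\<^sup>2 + 2*a*Y - a\<^sup>2*(s\<^sup>2-1)/D"
      using D by (simp add: field_simps power2_eq_square)
    also have "\<dots> = D*Y\<^sup>2 + 2*a*Y - a\<^sup>2*g" using D s2 by simp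
    finally show ?thesis unfolding D_def by (simp add: power2_eq_square algebra_simps)
  qed
  have pos: "0 < Y + a*(s+1)/D" using a D s1 Y by (simp add: add_nonneg_pos)
  have "(1+g)*a\<^sup>2 \<le> (Y+a)\<^sup>2 - (Y*C)\<^sup>2 \<longleftrightarrow> 0 \<le> D*(Y - a*(s-1)/D)*(Y + a*(s+1)/D)"
    using iden by linarith
  also have "\<dots> \<longleftrightarrow> 0 \<le> Y - a*(s-1)/D"
    using D pos by (simp add: zero_le_mult_iff)
  finally show ?thesis unfolding s_def D_def by simp
qed

lemma sr_core:
  fixes b c z g :: real
  assumes b: "0 < b" and c: "0 \<le> c" "c < b" and z: "0 \<le> z" and g: "0 < g"
  shows "(1+g)*(b\<^sup>2 - c\<^sup>2) \<le> (z+b)\<^sup>2 - c\<^sup>2 \<longleftrightarrow> b*(sqrt (1+g*(1-(c/b)\<^sup>2))-1) \<le> z"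
proof -
  have cb: "c/b < 1" "0 \<le> c/b" using b c by auto
  have "(c/b)*(c/b) \<le> (c/b)*1" using cb by (intro mult_left_mono) auto
  then have cb2: "(c/b)\<^sup>2 < 1" using cb by (simp add: power2_eq_square)
  define s where "s = sqrt (1+g*(1-(c/b)\<^sup>2))"
  have s2: "s\<^sup>2 = 1+g*(1-(c/b)\<^sup>2)" unfolding s_def using cb2 g by simp
  have s1: "0 \<le> s" unfolding s_def using cb2 g by simp
  have bs: "(b * s)^2 = b\<^sup>2 + g*(b\<^sup>2 - c\<^sup>2)"
    using b s2 by (simp add: power_mult_distrib field_simps power2_eq_square)
  have "(1+g)*(b\<^sup>2 - c\<^sup>2) \<le> (z+b)\<^sup>2 - c\<^sup>2 \<longleftrightarrow> (b * s)^2 \<le> (z+b)\<^sup>2"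
  proof -
    have e: "(1+g)*(b\<^sup>2 - c\<^sup>2) = (b * s)^2 - c\<^sup>2" using bs by (simp add: algebra_simps)
    show ?thesis by (subst e) simp
  qed
  also have "\<dots> \<longleftrightarrow> b * s \<le> z+b"
    using b s1 z by (intro power2_le_iff_abs_le[THEN trans]) auto
  finally show ?thesis unfolding s_def by (simp add: algebra_simps)
qed

lemma gamma_pos: "0 < r \<Longrightarrow> 0 < (2::real) powr (2*r) - 1"
  by simp

lemma rd_iff:
  assumes Ps: "Ps > 0" and Pr: "Pr > 0" and C: "0 \<le> C" "C < 1" and r: "r > 0"
    and x: "0 \<le> x" and y: "0 \<le> y"
  shows "r \<le> R_rd Ps Pr C x y \<longleftrightarrow> (Ps*y+1)*Psi r C/(Pr*(1-C\<^sup>2)) \<le> x"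
proof -
  define a where "a = Ps*y+1"
  define Y where "Y = Pr*x"
  define g where "g = (2::real) powr (2*r) - 1"
  have a: "0 < a" unfolding a_def using Ps y by (simp add: add_nonneg_pos)
  have Y: "0 \<le> Y" unfolding Y_def using Pr x by simp
  have g: "0 < g" unfolding g_def using r by simp
  have "C*C \<le> C*1" using C by (intro mult_left_mono) auto
  then have D: "0 < 1 - C\<^sup>2" using C by (simp add: power2_eq_square)
  have N: "(Pr * x + Ps * y + 1)\<^sup>2 - (Pr * x * C)\<^sup>2 = (Y+a)\<^sup>2 - (Y*C)\<^sup>2"
    unfolding a_def Y_def by (simp add: algebra_simps)
  have "(Y*C)\<^sup>2 \<le> Y\<^sup>2" using C Y by (simp add: power_mult_distrib power_le_one mult_left_le)
  moreover have "0 \<le> Y * (a*2)" using a Y by simp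
  ultimately have Npos: "a\<^sup>2 \<le> (Y+a)\<^sup>2 - (Y*C)\<^sup>2" by (simp add: power2_eq_square algebra_simps)
  have a2: "0 < a\<^sup>2" using a by simp
  have "r \<le> R_rd Ps Pr C x y \<longleftrightarrow> 2*r \<le> log 2 (((Y+a)\<^sup>2 - (Y*C)\<^sup>2) / a\<^sup>2)"
    unfolding R_rd_def N by (simp add: a_def mult.commute)
  also have "\<dots> \<longleftrightarrow> 2 powr (2*r) \<le> ((Y+a)\<^sup>2 - (Y*C)\<^sup>2) / a\<^sup>2"
    using Npos a2 by (intro le_log_iff) (simp, rule divide_pos_pos, linarith, simp)
  also have "\<dots> \<longleftrightarrow> (1+g)*a\<^sup>2 \<le> (Y+a)\<^sup>2 - (Y*C)\<^sup>2"
    using a2 by (simp add: g_def le_divide_eq)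
  also have "\<dots> \<longleftrightarrow> a*(sqrt (1+g*(1-C\<^sup>2))-1)/(1-C\<^sup>2) \<le> Y"
    by (rule quad_core[OF a Y C g])
  also have "\<dots> \<longleftrightarrow> (Ps*y+1)*Psi r C/(Pr*(1-C\<^sup>2)) \<le> x"
    unfolding Psi_def a_def Y_def g_def using Pr D
    by (simp add: divide_le_eq mult.commute mult.left_commute) (simp add: field_simps)
  finally show ?thesis .
qed

lemma sr_iff:
  assumes Ps: "Ps > 0" and Pr: "Pr > 0" and C: "0 \<le> C" "C < 1" and r: "r > 0"
    and x: "0 \<le> x" and y: "0 \<le> y"
  shows "r \<le> R_sr Ps Pr C x y \<longleftrightarrow> (Pr*y+1)*Psi r (Pr*y*C/(Pr*y+1))/Ps \<le> x"
proof -
  define b where "b = Pr*y+1"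
  define c where "c = Pr*y*C"
  define z where "z = Ps*x"
  define g where "g = (2::real) powr (2*r) - 1"
  have b: "0 < b" unfolding b_def using Pr y by (simp add: add_nonneg_pos)
  have c0: "0 \<le> c" unfolding c_def using Pr y C by simp
  have "Pr*y*C \<le> Pr*y*1" using Pr y C by (intro mult_left_mono) auto
  then have cb: "c < b" unfolding c_def b_def by simp
  have z: "0 \<le> z" unfolding z_def using Ps x by simp
  have g: "0 < g" unfolding g_def using r by simp
  have N: "(Ps * x + Pr * y + 1)\<^sup>2 - (Pr * y * C)\<^sup>2 = (z+b)\<^sup>2 - c\<^sup>2"
    unfolding b_def c_def z_def by (simp add: algebra_simps)
  have Dn: "(Pr * y + 1)\<^sup>2 - (Pr * y * C)\<^sup>2 = b\<^sup>2 - c\<^sup>2"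
    unfolding b_def c_def by simp
  have "c\<^sup>2 < b\<^sup>2" using c0 cb by (intro power_strict_mono) auto
  then have Dpos: "0 < b\<^sup>2 - c\<^sup>2" by simp
  have "b\<^sup>2 \<le> (z+b)\<^sup>2" using b z by (intro power_mono) auto
  then have Npos: "b\<^sup>2 - c\<^sup>2 \<le> (z+b)\<^sup>2 - c\<^sup>2" by simp
  have "r \<le> R_sr Ps Pr C x y \<longleftrightarrow> 2*r \<le> log 2 (((z+b)\<^sup>2 - c\<^sup>2) / (b\<^sup>2 - c\<^sup>2))"
    unfolding R_sr_def N Dn by (simp add: mult.commute)
  also have "\<dots> \<longleftrightarrow> 2 powr (2*r) \<le> ((z+b)\<^sup>2 - c\<^sup>2) / (b\<^sup>2 - c\<^sup>2)"
    using Npos Dpos by (intro le_log_iff) (simp, rule divide_pos_pos, linarith, simp)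
  also have "\<dots> \<longleftrightarrow> (1+g)*(b\<^sup>2 - c\<^sup>2) \<le> (z+b)\<^sup>2 - c\<^sup>2"
    using Dpos by (simp add: g_def le_divide_eq)
  also have "\<dots> \<longleftrightarrow> b*(sqrt (1+g*(1-(c/b)\<^sup>2))-1) \<le> z"
    by (rule sr_core[OF b c0 cb z g])
  also have "\<dots> \<longleftrightarrow> (Pr*y+1)*Psi r (Pr*y*C/(Pr*y+1))/Ps \<le> x"
    unfolding Psi_def b_def c_def z_def g_def using Ps
    by (simp add: divide_le_eq mult.commute mult.left_commute)
  finally show ?thesis .
qed



lemma indep_var_from_vars:
  assumes P: "prob_space M" and ind: "prob_space.indep_vars M M' X I"
    and AB: "Ia \<inter> Ib = {}" "Ia \<subseteq> I" "Ib \<subseteq> I"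
    and Fa: "Fa \<in> measurable (PiM Ia M') Na" and Fb: "Fb \<in> measurable (PiM Ib M') Nb"
  shows "prob_space.indep_var M Na (\<lambda>\<omega>. Fa (restrict (\<lambda>i. X i \<omega>) Ia)) Nb (\<lambda>\<omega>. Fb (restrict (\<lambda>i. X i \<omega>) Ib))"
proof -
  interpret prob_space M by (rule P)
  have "indep_var Na (Fa \<circ> (\<lambda>\<omega>. restrict (\<lambda>i. X i \<omega>) Ia)) Nb (Fb \<circ> (\<lambda>\<omega>. restrict (\<lambda>i. X i \<omega>) Ib))"
    by (rule indep_var_compose[OF indep_var_restrict[OF ind AB] Fa Fb])
  then show ?thesis by (simp add: comp_def)
qed

lemma indep4:
  fixes A B Cc D :: "'a \<Rightarrow> real"
  assumes P: "prob_space M" and ind: "prob_space.indep_vars M (\<lambda>_. borel) (\<lambda>i. [A, B, Cc, D] ! i) {0..<4}"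
  shows "prob_space.indep_var M (lborel \<Otimes>\<^sub>M lborel) (\<lambda>\<omega>. (A \<omega>, B \<omega>)) (lborel \<Otimes>\<^sub>M lborel) (\<lambda>\<omega>. (Cc \<omega>, D \<omega>))"
    and "prob_space.indep_var M lborel A lborel B"
    and "prob_space.indep_var M lborel Cc lborel D"
proof -
  have m01: "(\<lambda>f::nat\<Rightarrow>real. (f 0, f 1)) \<in> measurable (PiM {0::nat,1} (\<lambda>_. borel)) (lborel \<Otimes>\<^sub>M (lborel::real measure))"
    by measurable
  have m23: "(\<lambda>f::nat\<Rightarrow>real. (f 2, f 3)) \<in> measurable (PiM {2::nat,3} (\<lambda>_. borel)) (lborel \<Otimes>\<^sub>M (lborel::real measure))"
    by measurable
  have "prob_space.indep_var M (lborel \<Otimes>\<^sub>M lborel) (\<lambda>\<omega>. (\<lambda>f::nat\<Rightarrow>real. (f 0, f 1)) (restrict (\<lambda>i. ([A, B, Cc, D] ! i) \<omega>) {0,1}))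
      (lborel \<Otimes>\<^sub>M lborel) (\<lambda>\<omega>. (\<lambda>f::nat\<Rightarrow>real. (f 2, f 3)) (restrict (\<lambda>i. ([A, B, Cc, D] ! i) \<omega>) {2,3}))"
    by (rule indep_var_from_vars[OF P ind _ _ _ m01 m23]) auto
  then show "prob_space.indep_var M (lborel \<Otimes>\<^sub>M lborel) (\<lambda>\<omega>. (A \<omega>, B \<omega>)) (lborel \<Otimes>\<^sub>M lborel) (\<lambda>\<omega>. (Cc \<omega>, D \<omega>))"
    by simp
  have m0: "\<And>j. (\<lambda>f::nat\<Rightarrow>real. f j) \<in> measurable (PiM {j::nat} (\<lambda>_. borel)) (lborel::real measure)"
    by measurable
  have "prob_space.indep_var M lborel (\<lambda>\<omega>. (\<lambda>f::nat\<Rightarrow>real. f 0) (restrict (\<lambda>i. ([A, B, Cc, D] ! i) \<omega>) {0}))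
      lborel (\<lambda>\<omega>. (\<lambda>f::nat\<Rightarrow>real. f 1) (restrict (\<lambda>i. ([A, B, Cc, D] ! i) \<omega>) {1}))"
    by (rule indep_var_from_vars[OF P ind _ _ _ m0 m0]) auto
  then show "prob_space.indep_var M lborel A lborel B" by simp
  have "prob_space.indep_var M lborel (\<lambda>\<omega>. (\<lambda>f::nat\<Rightarrow>real. f 2) (restrict (\<lambda>i. ([A, B, Cc, D] ! i) \<omega>) {2}))
      lborel (\<lambda>\<omega>. (\<lambda>f::nat\<Rightarrow>real. f 3) (restrict (\<lambda>i. ([A, B, Cc, D] ! i) \<omega>) {3}))"
    by (rule indep_var_from_vars[OF P ind _ _ _ m0 m0]) auto
  then show "prob_space.indep_var M lborel Cc lborel D" by simp
qed

lemma pair_prob: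
  assumes P: "prob_space M" and X: "distributed M lborel X (\<lambda>x. ennreal (f x))"
    and Y: "distributed M lborel Y (\<lambda>x. ennreal (g x))"
    and ind: "prob_space.indep_var M lborel X lborel Y"
    and S: "S \<in> sets (lborel \<Otimes>\<^sub>M lborel)"
  shows "emeasure M ((\<lambda>\<omega>. (X \<omega>, Y \<omega>)) -` S \<inter> space M)
       = (\<integral>\<^sup>+y. \<integral>\<^sup>+x. ennreal (f x) * ennreal (g y) * indicator S (x,y) \<partial>lborel \<partial>lborel)"
proof -
  interpret prob_space M by (rule P)
  have J: "distributed M (lborel \<Otimes>\<^sub>M lborel) (\<lambda>x. (X x, Y x)) (\<lambda>(x, y). ennreal (f x) * ennreal (g y))"
    by (rule distributed_joint_indep[OF _ _ X Y ind]) (auto intro: lborel.sigma_finite_measure_axioms)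
  have fm: "(\<lambda>x. ennreal (f x)) \<in> borel_measurable lborel" using distributed_borel_measurable[OF X] by simp
  have gm: "(\<lambda>x. ennreal (g x)) \<in> borel_measurable lborel" using distributed_borel_measurable[OF Y] by simp
  have "emeasure M ((\<lambda>\<omega>. (X \<omega>, Y \<omega>)) -` S \<inter> space M)
      = (\<integral>\<^sup>+z. (case z of (x, y) \<Rightarrow> ennreal (f x) * ennreal (g y)) * indicator S z \<partial>(lborel \<Otimes>\<^sub>M lborel))"
    by (rule distributed_emeasure[OF J S])
  also have "\<dots> = (\<integral>\<^sup>+y. \<integral>\<^sup>+x. ennreal (f x) * ennreal (g y) * indicator S (x,y) \<partial>lborel \<partial>lborel)"
    by (subst lborel_pair.nn_integral_snd[symmetric]) (use fm gm S in \<open>auto simp: case_prod_beta\<close>)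
  finally show ?thesis .
qed


lemma Gamma_nat: "1 \<le> m \<Longrightarrow> Gamma (real m) = fact (m - 1)"
  using Gamma_fact[of "m - 1"] by (simp add: of_nat_diff)

lemma gd_erlang:
  assumes "1 \<le> m" "0 < \<theta>"
  shows "gamma_density m \<theta> x = erlang_density (m - 1) (1/\<theta>) x"
proof (cases "x < 0")
  case False
  have sm: "Suc (m - 1) = m" using assms by simp
  show ?thesis using False assms
    by (simp add: gamma_density_def erlang_density_def Gamma_nat sm power_one_over)
qed (simp add: gamma_density_def erlang_density_def)

lemma Psi_nonneg:
  assumes "0 < r" "v\<^sup>2 \<le> 1"
  shows "0 \<le> Psi r v"
proof -
  have "0 < (2::real) powr (2*r) - 1" using assms by simp
  then have h1: "0 \<le> (2::real) powr (2*r) - 1" by linarith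
  have h2: "0 \<le> 1 - v\<^sup>2" using assms by linarith
  have "0 \<le> ((2::real) powr (2*r) - 1) * (1 - v\<^sup>2)" by (rule mult_nonneg_nonneg[OF h1 h2])
  then have "1 \<le> sqrt (1 + ((2::real) powr (2*r) - 1) * (1 - v\<^sup>2))" by simp
  then show ?thesis unfolding Psi_def by linarith
qed

lemma erlang_term_nonneg:
  assumes "0 \<le> l" "0 \<le> e"
  shows "0 \<le> erlang_density k l y * e * y^i"
  using assms by (cases "y < 0") (auto simp: erlang_density_def)


lemma final_term:
  fixes E B P F b Fm L \<theta> Fsd Frr Fsr Trr Iv :: real
  assumes "0<\<theta>" "0<L" "0 < Fsd" "0<Frr" "0<Fsr" "0<Fm" "0 < Trr"
  shows "E/(Fsd*Frr*Fsr*\<theta>^n*Trr) * (B*P*F*b/(Fm*L^(k+n)) * Iv)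
       = Iv/(Fsr*Frr*Trr) * ((B*P*b*E/Fm) * ((1/\<theta>/L)^n * (F/(Fsd*L^k))))"
  using assms by (simp add: field_simps power_add power_divide)

lemma ennreal_sum2:
  assumes "\<And>m k. 0 \<le> F m k"
  shows "ennreal (\<Sum>m\<in>A. \<Sum>k\<in>B m. F m k) = (\<Sum>m\<in>A. \<Sum>k\<in>B m. ennreal (F m k))"
  using assms by (simp add: sum_nonneg sum_ennreal)

theorem theorem2:
  fixes M :: "'a measure"
    and gsr grr grd gsd :: "'a \<Rightarrow> real"
    and Ps Pr C r :: real
    and msr mrr mrd msd :: nat
    and \<pi>sr \<pi>rr \<pi>rd \<pi>sd \<theta>sr \<theta>rr \<theta>rd \<theta>sd :: real
  assumes "prob_space M"
    and "Ps > 0" and "Pr > 0" and "r > 0" and "0 \<le> C" and "C < 1"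
    and "msr \<ge> 1" and "mrr \<ge> 1" and "mrd \<ge> 1" and "msd \<ge> 1"
    and "\<pi>sr > 0" and "\<pi>rr > 0" and "\<pi>rd > 0" and "\<pi>sd > 0"
    and "\<theta>sr = \<pi>sr / real msr" and "\<theta>rr = \<pi>rr / real mrr"
    and "\<theta>rd = \<pi>rd / real mrd" and "\<theta>sd = \<pi>sd / real msd"
    and "prob_space.indep_vars M (\<lambda>_. borel) (\<lambda>i. [gsr, grr, grd, gsd] ! i) {0..<4}"
    and "distributed M lborel gsr (\<lambda>x. ennreal (gamma_density msr \<theta>sr x))"
    and "distributed M lborel grr (\<lambda>x. ennreal (gamma_density mrr \<theta>rr x))"
    and "distributed M lborel grd (\<lambda>x. ennreal (gamma_density mrd \<theta>rd x))"
    and "distributed M lborel gsd (\<lambda>x. ennreal (gamma_density msd \<theta>sd x))"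
  shows "let \<beta> = Psi r C / (Pr * \<theta>rd * (1 - C\<^sup>2)) in
    measure M {\<omega> \<in> space M.
        min (R_sr Ps Pr C (gsr \<omega>) (grr \<omega>)) (R_rd Ps Pr C (grd \<omega>) (gsd \<omega>)) < r}
    = 1 - exp (- \<beta>) /
          (Gamma (real msd) * Gamma (real mrr) * Gamma (real msr) * \<theta>sd ^ msd * \<theta>rr ^ mrr)
        * (\<Sum>m = 0..mrd - 1. \<Sum>k = 0..m.
             real (m choose k) * Ps ^ k * Gamma (real (k + msd)) * \<beta> ^ m
             / (Gamma (real m + 1) * (Ps * \<beta> + 1 / \<theta>sd) ^ (k + msd))
           * (LBINT x:{0..}. x ^ (mrr - 1)
                * upper_inc_gamma msr ((Pr * x + 1) / (Ps * \<theta>sr) * Psi r (Pr * x * C / (Pr * x + 1)))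
                * exp (- x / \<theta>rr)))"
  proof -
  interpret P: prob_space M by (rule assms(1))
  have Ps: "Ps > 0" and Pr: "Pr > 0" and r: "r > 0" and C: "0 \<le> C" "C < 1"
    using assms by auto
  have m1: "1 \<le> msr" "1 \<le> mrr" "1 \<le> mrd" "1 \<le> msd" using assms by auto
  have th: "0 < \<theta>sr" "0 < \<theta>rr" "0 < \<theta>rd" "0 < \<theta>sd" using assms by auto
  define lsr where "lsr = 1/\<theta>sr"
  define lrr where "lrr = 1/\<theta>rr"
  define lrd where "lrd = 1/\<theta>rd"
  define lsd where "lsd = 1/\<theta>sd"
  have l: "0 < lsr" "0 < lrr" "0 < lrd" "0 < lsd" using th by (auto simp: lsr_def lrr_def lrd_def lsd_def)
  define fsr where "fsr = erlang_density (msr - 1) lsr"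
  define frr where "frr = erlang_density (mrr - 1) lrr"
  define frd where "frd = erlang_density (mrd - 1) lrd"
  define fsd where "fsd = erlang_density (msd - 1) lsd"
  have Dsr: "distributed M lborel gsr (\<lambda>x. ennreal (fsr x))"
    using assms(20) by (simp add: gd_erlang[OF m1(1) th(1)] fsr_def lsr_def)
  have Drr: "distributed M lborel grr (\<lambda>x. ennreal (frr x))"
    using assms(21) by (simp add: gd_erlang[OF m1(2) th(2)] frr_def lrr_def)
  have Drd: "distributed M lborel grd (\<lambda>x. ennreal (frd x))"
    using assms(22) by (simp add: gd_erlang[OF m1(3) th(3)] frd_def lrd_def)
  have Dsd: "distributed M lborel gsd (\<lambda>x. ennreal (fsd x))"
    using assms(23) by (simp add: gd_erlang[OF m1(4) th(4)] fsd_def lsd_def)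
  note I = indep4[OF assms(1) assms(19)]
  define SA where "SA = {p::real\<times>real. r \<le> R_sr Ps Pr C (fst p) (snd p)}"
  define SB where "SB = {p::real\<times>real. r \<le> R_rd Ps Pr C (fst p) (snd p)}"
  have SA: "SA \<in> sets (lborel \<Otimes>\<^sub>M lborel)"
  proof -
    have "SA = {p \<in> space (lborel \<Otimes>\<^sub>M lborel). r \<le> R_sr Ps Pr C (fst p) (snd p)}"
      by (simp add: SA_def space_pair_measure)
    also have "\<dots> \<in> sets (lborel \<Otimes>\<^sub>M lborel)" unfolding R_sr_def by measurable
    finally show ?thesis .
  qed
  have SB: "SB \<in> sets (lborel \<Otimes>\<^sub>M lborel)"
  proof -
    have "SB = {p \<in> space (lborel \<Otimes>\<^sub>M lborel). r \<le> R_rd Ps Pr C (fst p) (snd p)}"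
      by (simp add: SB_def space_pair_measure)
    also have "\<dots> \<in> sets (lborel \<Otimes>\<^sub>M lborel)" unfolding R_rd_def by measurable
    finally show ?thesis .
  qed
  have mgsr: "gsr \<in> borel_measurable M" using distributed_measurable[OF Dsr] by simp
  have mgrr: "grr \<in> borel_measurable M" using distributed_measurable[OF Drr] by simp
  have mgrd: "grd \<in> borel_measurable M" using distributed_measurable[OF Drd] by simp
  have mgsd: "gsd \<in> borel_measurable M" using distributed_measurable[OF Dsd] by simp
  define EA where "EA = (\<lambda>\<omega>. (gsr \<omega>, grr \<omega>)) -` SA \<inter> space M"
  define EB where "EB = (\<lambda>\<omega>. (grd \<omega>, gsd \<omega>)) -` SB \<inter> space M"
  have EAe: "EA \<in> P.events"
    unfolding EA_def by (rule measurable_sets[OF _ SA]) (use mgsr mgrr in measurable)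
  have EBe: "EB \<in> P.events"
    unfolding EB_def by (rule measurable_sets[OF _ SB]) (use mgrd mgsd in measurable)
  have Eeq: "{\<omega> \<in> space M. min (R_sr Ps Pr C (gsr \<omega>) (grr \<omega>)) (R_rd Ps Pr C (grd \<omega>) (gsd \<omega>)) < r}
      = space M - (EA \<inter> EB)"
    by (auto simp: EA_def EB_def SA_def SB_def)
  have prodAB: "P.prob (EA \<inter> EB) = P.prob EA * P.prob EB"
  proof -
    have "EA \<inter> EB = (\<lambda>\<omega>. ((gsr \<omega>, grr \<omega>), (grd \<omega>, gsd \<omega>))) -` (SA \<times> SB) \<inter> space M"
      by (auto simp: EA_def EB_def)
    then show ?thesis using P.indep_varD[OF I(1) SA SB] by (simp add: EA_def EB_def)
  qed
  have probE: "measure M {\<omega> \<in> space M. min (R_sr Ps Pr C (gsr \<omega>) (grr \<omega>)) (R_rd Ps Pr C (grd \<omega>) (gsd \<omega>)) < r}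
      = 1 - P.prob EA * P.prob EB"
    unfolding Eeq using EAe EBe by (simp add: P.prob_compl prodAB)
  define tA where "tA = (\<lambda>y. (Pr*y+1)*Psi r (Pr*y*C/(Pr*y+1))/Ps)"
  define TA where "TA = (\<lambda>y. exp (-lsr * tA y) * (\<Sum>n\<le>msr-1. (lsr * tA y)^n / fact n))"
  have tA0: "0 \<le> tA y" if y: "0 \<le> y" for y
  proof -
    have "Pr*y*C \<le> Pr*y*1" using Pr y C by (intro mult_left_mono) auto
    moreover have pos: "0 < Pr*y+1" using Pr y by (simp add: add_nonneg_pos)
    ultimately have v1: "Pr*y*C/(Pr*y+1) \<le> 1" by (subst divide_le_eq_1_pos[OF pos]) linarith
    have v0: "0 \<le> Pr*y*C/(Pr*y+1)" using Pr y C by simp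
    have "(Pr*y*C/(Pr*y+1))\<^sup>2 \<le> 1" using v0 v1 by (simp add: power_le_one)
    then have "0 \<le> Psi r (Pr*y*C/(Pr*y+1))" by (rule Psi_nonneg[OF r])
    then show ?thesis unfolding tA_def using Pr Ps y by simp
  qed
  have TA0: "0 \<le> TA y" if y: "0 \<le> y" for y
    unfolding TA_def using tA0[OF y] l by (intro mult_nonneg_nonneg sum_nonneg) auto
  have frrTA0: "0 \<le> frr y * TA y" for y
  proof (cases "y < 0")
    case False
    have "0 \<le> frr y" using l by (simp add: frr_def)
    then show ?thesis using TA0[of y] False by simp
  qed (simp add: frr_def erlang_density_def)
  have EAint: "emeasure M EA = (\<integral>\<^sup>+y. ennreal (frr y * TA y) \<partial>lborel)"
  proof -
    have "emeasure M EA = (\<integral>\<^sup>+y. \<integral>\<^sup>+x. ennreal (fsr x) * ennreal (frr y) * indicator SA (x,y) \<partial>lborel \<partial>lborel)"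
      unfolding EA_def by (rule pair_prob[OF assms(1) Dsr Drr I(2) SA])
    also have "\<dots> = (\<integral>\<^sup>+y. ennreal (frr y * TA y) \<partial>lborel)"
    proof (rule nn_integral_cong)
      fix y :: real
      show "(\<integral>\<^sup>+x. ennreal (fsr x) * ennreal (frr y) * indicator SA (x, y) \<partial>lborel) = ennreal (frr y * TA y)"
      proof (cases "y < 0")
        case True
        then show ?thesis by (simp add: frr_def erlang_density_def)
      next
        case False
        have "(\<integral>\<^sup>+x. ennreal (fsr x) * ennreal (frr y) * indicator SA (x, y) \<partial>lborel)
           = (\<integral>\<^sup>+x. ennreal (frr y) * (ennreal (fsr x) * indicator {tA y..} x) \<partial>lborel)"
        proof (rule nn_integral_cong)
          fix x :: real
          show "ennreal (fsr x) * ennreal (frr y) * indicator SA (x, y) = ennreal (frr y) * (ennreal (fsr x) * indicator {tA y..} x)"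
          proof (cases "x < 0")
            case True then show ?thesis by (simp add: fsr_def erlang_density_def)
          next
            case xF: False
            have "(x,y) \<in> SA \<longleftrightarrow> x \<in> {tA y..}"
              using sr_iff[OF Ps Pr C r, of x y] xF False by (simp add: SA_def tA_def)
            then show ?thesis by (simp add: mult_ac split: split_indicator)
          qed
        qed
        also have "\<dots> = ennreal (frr y) * (\<integral>\<^sup>+x. ennreal (fsr x) * indicator {tA y..} x \<partial>lborel)"
          by (rule nn_integral_cmult) (unfold fsr_def, measurable)
        also have "\<dots> = ennreal (frr y) * ennreal (TA y)"
          using erlang_tail[OF l(1) tA0[of y]] False by (simp add: fsr_def TA_def)
        also have "\<dots> = ennreal (frr y * TA y)"
          using l by (simp add: ennreal_mult' frr_def)
        finally show ?thesis .
      qed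
    qed
    finally show ?thesis .
  qed
  have mfrrTA: "(\<lambda>y. frr y * TA y) \<in> borel_measurable lborel"
    unfolding frr_def TA_def tA_def Psi_def by measurable
  have PA: "P.prob EA = (LINT y|lborel. frr y * TA y)"
    using EAint by (simp add: measure_def integral_eq_nn_integral[OF mfrrTA] frrTA0)
  define K where "K = fact (msr-1) * fact (mrr-1) * \<theta>rr^mrr"
  have Ieq: "(LBINT x:{0..}. x ^ (mrr - 1)
                * upper_inc_gamma msr ((Pr * x + 1) / (Ps * \<theta>sr) * Psi r (Pr * x * C / (Pr * x + 1)))
                * exp (- x / \<theta>rr)) = K * (LINT y|lborel. frr y * TA y)"
  proof -
    have "(LBINT x:{0..}. x ^ (mrr - 1)
                * upper_inc_gamma msr ((Pr * x + 1) / (Ps * \<theta>sr) * Psi r (Pr * x * C / (Pr * x + 1)))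
                * exp (- x / \<theta>rr)) = (LINT x|lborel. K * (frr x * TA x))"
      unfolding set_lebesgue_integral_def
    proof (rule Bochner_Integration.integral_cong[OF refl])
      fix x :: real
      show "indicator {0..} x *\<^sub>R (x ^ (mrr - 1)
                * upper_inc_gamma msr ((Pr * x + 1) / (Ps * \<theta>sr) * Psi r (Pr * x * C / (Pr * x + 1)))
                * exp (- x / \<theta>rr)) = K * (frr x * TA x)"
      proof (cases "x < 0")
        case True then show ?thesis by (simp add: frr_def erlang_density_def)
      next
        case False
        have u: "(Pr * x + 1) / (Ps * \<theta>sr) * Psi r (Pr * x * C / (Pr * x + 1)) = lsr * tA x"
          by (simp add: lsr_def tA_def)
        have U: "upper_inc_gamma msr (lsr * tA x) = fact (msr-1) * TA x"
          using uig_closed[of "lsr * tA x" msr] tA0[of x] False l by (simp add: TA_def)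
        have sm: "Suc (mrr - 1) = mrr" using m1 by simp
        have lt: "lrr^mrr * \<theta>rr^mrr = 1" using th by (simp add: lrr_def power_one_over)
        have ex: "exp (- x / \<theta>rr) = exp (- lrr * x)" by (simp add: lrr_def)
        have fr: "frr x = lrr^mrr * x^(mrr-1) * exp (- lrr * x) / fact (mrr-1)"
          using False unfolding frr_def erlang_density_def sm by simp
        show ?thesis using False unfolding u U ex fr K_def
          using lt by (simp add: field_simps)
      qed
    qed
    also have "\<dots> = K * (LINT y|lborel. frr y * TA y)" by simp
    finally show ?thesis .
  qed
  define \<beta> where "\<beta> = Psi r C / (Pr * \<theta>rd * (1 - C\<^sup>2))"
  have "C*C \<le> C*1" using C by (intro mult_left_mono) auto
  then have D: "0 < 1 - C\<^sup>2" using C by (simp add: power2_eq_square)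
  have PsiC: "0 \<le> Psi r C"
    by (rule Psi_nonneg[OF r]) (use D in simp)
  have \<beta>0: "0 \<le> \<beta>" unfolding \<beta>_def using PsiC Pr th D by simp
  define tB where "tB = (\<lambda>y. (Ps*y+1)*Psi r C/(Pr*(1-C\<^sup>2)))"
  define TB where "TB = (\<lambda>y. exp (-lrd * tB y) * (\<Sum>n\<le>mrd-1. (lrd * tB y)^n / fact n))"
  have ltB: "lrd * tB y = (Ps*y+1)*\<beta>" for y
    by (simp add: lrd_def tB_def \<beta>_def)
  have tB0: "0 \<le> tB y" if y: "0 \<le> y" for y
    unfolding tB_def using PsiC Ps Pr D y by simp
  have EBint: "emeasure M EB = (\<integral>\<^sup>+y. ennreal (fsd y * TB y) \<partial>lborel)"
  proof -
    have "emeasure M EB = (\<integral>\<^sup>+y. \<integral>\<^sup>+x. ennreal (frd x) * ennreal (fsd y) * indicator SB (x,y) \<partial>lborel \<partial>lborel)"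
      unfolding EB_def by (rule pair_prob[OF assms(1) Drd Dsd I(3) SB])
    also have "\<dots> = (\<integral>\<^sup>+y. ennreal (fsd y * TB y) \<partial>lborel)"
    proof (rule nn_integral_cong)
      fix y :: real
      show "(\<integral>\<^sup>+x. ennreal (frd x) * ennreal (fsd y) * indicator SB (x, y) \<partial>lborel) = ennreal (fsd y * TB y)"
      proof (cases "y < 0")
        case True
        then show ?thesis by (simp add: fsd_def erlang_density_def)
      next
        case False
        have "(\<integral>\<^sup>+x. ennreal (frd x) * ennreal (fsd y) * indicator SB (x, y) \<partial>lborel)
           = (\<integral>\<^sup>+x. ennreal (fsd y) * (ennreal (frd x) * indicator {tB y..} x) \<partial>lborel)"
        proof (rule nn_integral_cong)
          fix x :: real
          show "ennreal (frd x) * ennreal (fsd y) * indicator SB (x, y) = ennreal (fsd y) * (ennreal (frd x) * indicator {tB y..} x)"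
          proof (cases "x < 0")
            case True then show ?thesis by (simp add: frd_def erlang_density_def)
          next
            case xF: False
            have "(x,y) \<in> SB \<longleftrightarrow> x \<in> {tB y..}"
              using rd_iff[OF Ps Pr C r, of x y] xF False by (simp add: SB_def tB_def)
            then show ?thesis by (simp add: mult_ac split: split_indicator)
          qed
        qed
        also have "\<dots> = ennreal (fsd y) * (\<integral>\<^sup>+x. ennreal (frd x) * indicator {tB y..} x \<partial>lborel)"
          by (rule nn_integral_cmult) (unfold frd_def, measurable)
        also have "\<dots> = ennreal (fsd y) * ennreal (TB y)"
          using erlang_tail[OF l(3) tB0[of y]] False by (simp add: frd_def TB_def)
        also have "\<dots> = ennreal (fsd y * TB y)"
          using l by (simp add: ennreal_mult' fsd_def)
        finally show ?thesis .
      qed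
    qed
    finally show ?thesis .
  qed
  define s where "s = \<beta> * Ps"
  have s0: "0 \<le> s" unfolding s_def using \<beta>0 Ps by simp
  define g where "g = (\<lambda>k y. erlang_density (msd-1) lsd y * exp (-s*y) * y^k)"
  define c where "c = (\<lambda>m k. real (m choose k) * Ps^k * \<beta>^m * exp (-\<beta>) / fact m)"
  define Mv where "Mv = (\<lambda>k. (lsd/(lsd+s))^(Suc (msd-1)) * (fact (msd-1+k) / (fact (msd-1) * (lsd+s)^k)))"
  have c0: "0 \<le> c m k" for m k unfolding c_def using Ps \<beta>0 by simp
  have g0: "0 \<le> g k y" for k y unfolding g_def using l by (intro erlang_term_nonneg) auto
  have Mv0: "0 \<le> Mv k" for k unfolding Mv_def using l s0 by simp
  have ptw: "fsd y * TB y = (\<Sum>m\<le>mrd-1. \<Sum>k\<le>m. c m k * g k y)" for y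
  proof -
    have e: "exp (-lrd * tB y) = exp (-\<beta>) * exp (-s*y)"
      using ltB[of y] by (simp add: s_def exp_add[symmetric] algebra_simps)
    have "fsd y * TB y = (\<Sum>m\<le>mrd-1. fsd y * exp (-\<beta>) * exp (-s*y) * ((Ps*y+1)^m * \<beta>^m / fact m))"
      unfolding TB_def e ltB by (simp add: sum_distrib_left power_mult_distrib mult_ac)
    also have "\<dots> = (\<Sum>m\<le>mrd-1. \<Sum>k\<le>m. c m k * g k y)"
    proof (rule sum.cong[OF refl])
      fix m
      have bin: "(Ps*y+1)^m = (\<Sum>k\<le>m. real (m choose k) * (Ps*y)^k)"
        using binomial_ring[of "Ps*y" 1 m] by simp
      show "fsd y * exp (-\<beta>) * exp (-s*y) * ((Ps*y+1)^m * \<beta>^m / fact m) = (\<Sum>k\<le>m. c m k * g k y)"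
        unfolding bin sum_distrib_left sum_distrib_right sum_divide_distrib
        by (rule sum.cong[OF refl]) (simp add: c_def g_def fsd_def power_mult_distrib field_simps)
    qed
    finally show ?thesis .
  qed
  have PBint: "(\<integral>\<^sup>+y. ennreal (fsd y * TB y) \<partial>lborel) = ennreal (\<Sum>m\<le>mrd-1. \<Sum>k\<le>m. c m k * Mv k)"
  proof -
    have "(\<integral>\<^sup>+y. ennreal (fsd y * TB y) \<partial>lborel) = (\<integral>\<^sup>+y. (\<Sum>m\<le>mrd-1. \<Sum>k\<le>m. ennreal (c m k) * ennreal (g k y)) \<partial>lborel)"
      unfolding ptw using c0 g0 by (simp add: ennreal_sum2 mult_nonneg_nonneg ennreal_mult)
    also have "\<dots> = (\<Sum>m\<le>mrd-1. \<Sum>k\<le>m. ennreal (c m k) * (\<integral>\<^sup>+y. ennreal (g k y) \<partial>lborel))"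
      by (subst nn_integral_sum, (unfold g_def, measurable)[1],
          subst nn_integral_sum, (unfold g_def, measurable)[1],
          subst nn_integral_cmult, (unfold g_def, measurable)[1], rule refl)
    also have "\<dots> = (\<Sum>m\<le>mrd-1. \<Sum>k\<le>m. ennreal (c m k) * ennreal (Mv k))"
      unfolding g_def Mv_def using erlang_exp_moment[OF l(4) s0] by simp
    also have "\<dots> = ennreal (\<Sum>m\<le>mrd-1. \<Sum>k\<le>m. c m k * Mv k)"
      using c0 Mv0 by (simp add: ennreal_sum2 mult_nonneg_nonneg ennreal_mult)
    finally show ?thesis .
  qed
  have PB: "P.prob EB = (\<Sum>m\<le>mrd-1. \<Sum>k\<le>m. c m k * Mv k)"
    using EBint PBint c0 Mv0 by (simp add: measure_def sum_nonneg)
  define LI where "LI = (LINT y|lborel. frr y * TA y)"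
  define Lm where "Lm = Ps * \<beta> + 1 / \<theta>sd"
  have Lm: "0 < Lm" unfolding Lm_def using Ps \<beta>0 th by (simp add: add_nonneg_pos)
  have trm: "exp (- \<beta>) / (Gamma (real msd) * Gamma (real mrr) * Gamma (real msr) * \<theta>sd ^ msd * \<theta>rr ^ mrr)
      * (real (m choose k) * Ps ^ k * Gamma (real (k + msd)) * \<beta> ^ m / (Gamma (real m + 1) * Lm ^ (k + msd)) * (K * LI))
      = LI * (c m k * Mv k)" for m k
  proof -
    have G1: "Gamma (real msd) = fact (msd-1)" "Gamma (real mrr) = fact (mrr-1)" "Gamma (real msr) = fact (msr-1)"
      using m1 by (simp_all add: Gamma_nat)
    have G2: "Gamma (real (k + msd)) = fact (msd - 1 + k)"
      using m1 Gamma_nat[of "k+msd"] by (simp add: add.commute)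
    have G3: "Gamma (real m + 1) = fact m" using Gamma_fact[of m] by (simp add: add.commute)
    have Lm2: "lsd + s = Lm" by (simp add: lsd_def s_def Lm_def mult.commute)
    have sm: "Suc (msd - 1) = msd" using m1 by simp
    have Mv': "Mv k = (1/\<theta>sd/Lm)^msd * (fact (msd-1+k) / (fact (msd-1) * Lm^k))"
      unfolding Mv_def Lm2 sm by (simp add: lsd_def)
    have "exp (- \<beta>) / (fact (msd-1) * fact (mrr-1) * fact (msr-1) * \<theta>sd ^ msd * \<theta>rr ^ mrr)
      * (real (m choose k) * Ps ^ k * fact (msd - 1 + k) * \<beta> ^ m / (fact m * Lm ^ (k + msd)) * (K * LI))
      = (K * LI) / (fact (msr-1) * fact (mrr-1) * \<theta>rr ^ mrr) * ((real (m choose k) * Ps ^ k * \<beta> ^ m * exp (- \<beta>) / fact m)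
        * ((1/\<theta>sd/Lm)^msd * (fact (msd-1+k) / (fact (msd-1) * Lm^k))))"
      by (rule final_term) (use th Lm in auto)
    also have "\<dots> = LI * (c m k * Mv k)"
      unfolding Mv' c_def K_def using th by simp
    finally show ?thesis unfolding G1 G2 G3 .
  qed
  have Kpos: "0 < K" unfolding K_def using th by simp
  have fin: "exp (- \<beta>) / (Gamma (real msd) * Gamma (real mrr) * Gamma (real msr) * \<theta>sd ^ msd * \<theta>rr ^ mrr)
      * (\<Sum>m\<le>mrd-1. \<Sum>k\<le>m. real (m choose k) * Ps ^ k * Gamma (real (k + msd)) * \<beta> ^ m / (Gamma (real m + 1) * Lm ^ (k + msd)) * (K * LI))
      = LI * (\<Sum>m\<le>mrd-1. \<Sum>k\<le>m. c m k * Mv k)"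
    unfolding sum_distrib_left by (intro sum.cong refl trm)
  show ?thesis
    unfolding Let_def \<beta>_def[symmetric] probE PA PB Ieq atLeast0AtMost Lm_def[symmetric] LI_def[symmetric]
    using fin by simp

qed

end
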